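(* Let $q$ be a prime power and $h\geq 2$ an integer. Then for each $t\in\{2,3\}$ there exists a $t$-fold blocking set of size $t(q^h+q^{h-1}+1)$ in $\mathrm{PG}(2,q^h)$.
   Context: $\mathrm{PG}(2,q^h)$ denotes the Desarguesian projective plane over $\mathbb{F}_{q^h}$. A $t$-fold blocking set is a set of points meeting every line in at least $t$ points. *)

theory Defs
  imports "HOL-Computational_Algebra.Primes"
begin

text \<open>A point is a 1-dimensional subspace of F^3 minus zero, represented as the set of all
 nonzero scalar multiples of a nonzero vector.\<close>

definition pg_point :: "'a::field \<times> 'a \<times> 'a \<Rightarrow> ('a \<times> 'a \<times> 'a) set" where
  "pg_point v = {(c * fst v, c * fst (snd v), c * snd (snd v)) | c. c \<noteq> 0}"

definition pg_points :: "('a::field \<times> 'a \<times> 'a) set set" where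
  "pg_points = {pg_point v | v. v \<noteq> (0,0,0)}"

definition pg_line :: "'a::field \<times> 'a \<times> 'a \<Rightarrow> ('a \<times> 'a \<times> 'a) set set" where
  "pg_line u = {P \<in> pg_points. \<forall>(x,y,z)\<in>P.
      fst u * x + fst (snd u) * y + snd (snd u) * z = 0}"

definition pg_lines :: "('a::field \<times> 'a \<times> 'a) set set set" where
  "pg_lines = {pg_line u | u. u \<noteq> (0,0,0)}"

definition t_fold_blocking_set :: "nat \<Rightarrow> ('a::field \<times> 'a \<times> 'a) set set \<Rightarrow> bool" where
  "t_fold_blocking_set t B \<longleftrightarrow>
     B \<subseteq> (pg_points :: ('a \<times> 'a \<times> 'a) set set) \<and>
     (\<forall>L \<in> (pg_lines :: ('a \<times> 'a \<times> 'a) set set set). card (B \<inter> L) \<ge> t)"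

definition prime_power :: "nat \<Rightarrow> bool" where
  "prime_power q \<longleftrightarrow> (\<exists>p k. prime p \<and> k \<ge> 1 \<and> q = p ^ k)"

end

theory Submission
  imports Defs "HOL-Number_Theory.Residues" "HOL-Computational_Algebra.Polynomial"
begin


definition sc :: "'a::field \<Rightarrow> 'a \<times> 'a \<times> 'a \<Rightarrow> 'a \<times> 'a \<times> 'a" where
  "sc c v = (c * fst v, c * fst (snd v), c * snd (snd v))"

definition dot :: "'a::field \<times> 'a \<times> 'a \<Rightarrow> 'a \<times> 'a \<times> 'a \<Rightarrow> 'a" where
  "dot u v = fst u * fst v + fst (snd u) * fst (snd v) + snd (snd u) * snd (snd v)"

lemma self_in_pg_point: "v \<in> pg_point v"
  unfolding pg_point_def by (rule CollectI, rule exI[of _ 1]) simp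

lemma pg_point_in_points: "v \<noteq> (0,0,0) \<Longrightarrow> pg_point v \<in> pg_points"
  unfolding pg_points_def by blast

lemma pg_point_eqD:
  assumes "pg_point v = pg_point w"
  shows "\<exists>c. c \<noteq> 0 \<and> w = sc c v"
proof -
  have "w \<in> pg_point v" using assms self_in_pg_point by metis
  then show ?thesis unfolding pg_point_def sc_def by auto
qed

lemma dot_sc: "dot u (sc c v) = c * dot u v"
  by (simp add: dot_def sc_def algebra_simps)

lemma mem_pg_line:
  assumes "v \<noteq> (0,0,0)"
  shows "pg_point v \<in> pg_line u \<longleftrightarrow> dot u v = 0"
proof
  assume "pg_point v \<in> pg_line u"
  then have "\<forall>(x,y,z)\<in>pg_point v. fst u * x + fst (snd u) * y + snd (snd u) * z = 0"
    unfolding pg_line_def by blast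
  then have "fst u * fst v + fst (snd u) * fst (snd v) + snd (snd u) * snd (snd v) = 0"
    using self_in_pg_point[of v] by (cases v) auto
  then show "dot u v = 0" by (simp add: dot_def)
next
  assume h: "dot u v = 0"
  have "\<forall>(x,y,z)\<in>pg_point v. fst u * x + fst (snd u) * y + snd (snd u) * z = 0"
  proof
    fix w assume "w \<in> pg_point v"
    then obtain c where "w = sc c v" unfolding pg_point_def sc_def by auto
    then have "dot u w = 0" using h by (simp add: dot_sc)
    then show "case w of (x,y,z) \<Rightarrow> fst u * x + fst (snd u) * y + snd (snd u) * z = 0"
      by (cases w) (simp add: dot_def)
  qed
  then show "pg_point v \<in> pg_line u"
    unfolding pg_line_def using pg_point_in_points[OF assms] by blast
qed

lemma pg_linesE:
  assumes "L \<in> pg_lines"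
  obtains u where "u \<noteq> (0,0,0)" "L = pg_line u"
  using assms unfolding pg_lines_def by blast

definition vblock :: "('a::field \<times> 'a \<times> 'a) set \<Rightarrow> bool" where
  "vblock S \<longleftrightarrow> (\<forall>u. u \<noteq> (0,0,0) \<longrightarrow> (\<exists>v\<in>S. dot u v = 0))"

lemma vblock_meets:
  assumes "vblock S" "(0,0,0) \<notin> S" "L \<in> pg_lines"
  shows "\<exists>v\<in>S. pg_point v \<in> L"
proof -
  obtain u where u: "u \<noteq> (0,0,0)" "L = pg_line u" using assms(3) by (rule pg_linesE)
  obtain v where v: "v \<in> S" "dot u v = 0" using assms(1) u unfolding vblock_def by blast
  have "v \<noteq> (0,0,0)" using v assms(2) by auto
  then show ?thesis using v u mem_pg_line by blast
qed

lemma redei_vblock: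
  fixes f :: "'a::{field,finite} \<Rightarrow> 'a" and M :: "'a set"
  assumes inj: "\<And>m. m \<notin> M \<Longrightarrow> inj (\<lambda>x. f x - m * x)" and ne: "M \<noteq> {}"
  shows "vblock ((\<lambda>x. (x, f x, 1)) ` UNIV \<union> (\<lambda>m. (1, m, 0)) ` M)"
  unfolding vblock_def
proof (intro allI impI)
  fix u :: "'a \<times> 'a \<times> 'a"
  assume u0: "u \<noteq> (0,0,0)"
  obtain al be ga where u: "u = (al, be, ga)" by (rule prod_cases3)
  let ?S = "(\<lambda>x. (x, f x, 1)) ` UNIV \<union> (\<lambda>m. (1, m, 0)) ` M"
  show "\<exists>v\<in>?S. dot u v = 0"
  proof (cases "be = 0")
    case False
    define m where "m = - al / be"
    show ?thesis
    proof (cases "m \<in> M")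
      case True
      have "dot u (1, m, 0) = 0" using False by (simp add: u dot_def m_def)
      moreover have "(1, m, 0) \<in> ?S" using True by (intro UnI2 imageI)
      ultimately show ?thesis by (rule bexI)
    next
      case mM: False
      have "inj (\<lambda>x. f x - m * x)" using inj[OF mM] .
      then have "surj (\<lambda>x. f x - m * x)" by (simp add: finite_UNIV_inj_surj)
      then obtain x where x0: "- ga / be = f x - m * x" by (rule surjE)
      have x: "f x - m * x = - ga / be" using x0 by (rule sym)
      have "f x = (f x - m * x) + m * x" by simp
      also have "\<dots> = - ga / be + m * x" by (simp only: x)
      finally have fx: "f x = - ga / be + m * x" .
      have bm: "be * m = - al" using False by (simp add: m_def)
      have "dot u (x, f x, 1) = al * x + be * (- ga / be + m * x) + ga"
        unfolding fx by (simp add: u dot_def)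
      also have "be * (- ga / be + m * x) = - ga + (be * m) * x"
        using False by (simp add: field_simps)
      also have "al * x + (- ga + (be * m) * x) + ga = 0" unfolding bm by simp
      finally have "dot u (x, f x, 1) = 0" .
      moreover have "(x, f x, 1) \<in> ?S" by (intro UnI1 rangeI)
      ultimately show ?thesis by (rule bexI)
    qed
  next
    case be: True
    show ?thesis
    proof (cases "al = 0")
      case False
      have "dot u (- ga / al, f (- ga / al), 1) = 0" using False be by (simp add: u dot_def)
      moreover have "(- ga / al, f (- ga / al), 1) \<in> ?S" by (intro UnI1 rangeI)
      ultimately show ?thesis by (rule bexI)
    next
      case True
      obtain m where "m \<in> M" using ne by blast
      have "dot u (1, m, 0) = 0" using True be by (simp add: u dot_def)
      moreover have "(1, m, 0) \<in> ?S" using \<open>m \<in> M\<close> by (intro UnI2 imageI)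
      ultimately show ?thesis by (rule bexI)
    qed
  qed
qed

definition sig :: "'a::field \<Rightarrow> 'a \<Rightarrow> 'a \<times> 'a \<times> 'a \<Rightarrow> 'a \<times> 'a \<times> 'a" where
  "sig a b v = (fst (snd v) / a, snd (snd v) / b, fst v)"

definition nmap :: "'a::field \<Rightarrow> 'a \<Rightarrow> 'a \<times> 'a \<times> 'a \<Rightarrow> 'a \<times> 'a \<times> 'a" where
  "nmap a b v = (snd (snd v), a * fst v, b * fst (snd v))"

lemma nmap_sig: "a \<noteq> 0 \<Longrightarrow> b \<noteq> 0 \<Longrightarrow> nmap a b (sig a b v) = v"
  by (cases v) (simp add: nmap_def sig_def)

lemma sig_nmap: "a \<noteq> 0 \<Longrightarrow> b \<noteq> 0 \<Longrightarrow> sig a b (nmap a b v) = v"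
  by (cases v) (simp add: nmap_def sig_def)

lemma nmap_sc: "nmap a b (sc c v) = sc c (nmap a b v)"
  by (simp add: nmap_def sc_def algebra_simps)

lemma sig_sc: "sig a b (sc c v) = sc c (sig a b v)"
  by (simp add: sig_def sc_def algebra_simps)

lemma sig3: "a \<noteq> 0 \<Longrightarrow> b \<noteq> 0 \<Longrightarrow> sig a b (sig a b (sig a b v)) = sc (1/(a*b)) v"
  by (cases v) (simp add: sig_def sc_def field_simps)

lemma sig_nz: "a \<noteq> 0 \<Longrightarrow> b \<noteq> 0 \<Longrightarrow> v \<noteq> (0,0,0) \<Longrightarrow> sig a b v \<noteq> (0,0,0)"
  by (cases v) (auto simp: sig_def)

lemma vblock_sig:
  assumes "vblock S" "a \<noteq> 0" "b \<noteq> 0"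
  shows "vblock (sig a b ` S)"
  unfolding vblock_def
proof (intro allI impI)
  fix u :: "'a \<times> 'a \<times> 'a"
  assume u0: "u \<noteq> (0,0,0)"
  obtain al be ga where u: "u = (al, be, ga)" by (rule prod_cases3)
  have "(ga, al / a, be / b) \<noteq> (0,0,0)" using u0 u assms by auto
  then obtain v where v: "v \<in> S" "dot (ga, al / a, be / b) v = 0"
    using assms(1) unfolding vblock_def by blast
  have "dot u (sig a b v) = dot (ga, al / a, be / b) v"
    by (cases v) (simp add: u dot_def sig_def algebra_simps)
  then show "\<exists>w\<in>sig a b ` S. dot u w = 0" using v by auto
qed


definition Kset :: "nat \<Rightarrow> 'a::field set" where "Kset q = {x. x ^ q = x}"
definition Tr :: "nat \<Rightarrow> nat \<Rightarrow> 'a::field \<Rightarrow> 'a" where "Tr q h x = (\<Sum>i<h. x ^ (q ^ i))"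

locale fsetting =
  fixes q h p k :: nat and ty :: "'a::{field,finite} itself"
  assumes p: "prime p" and k: "k \<ge> 1" and qdef: "q = p ^ k" and h: "h \<ge> 2"
    and card: "card (UNIV :: 'a set) = q ^ h"
begin

abbreviation "KK \<equiv> (Kset q :: 'a set)"
abbreviation "T \<equiv> (Tr q h :: 'a \<Rightarrow> 'a)"

lemma q_ge2: "q \<ge> 2"
proof -
  have "p \<ge> 2" using p prime_ge_2_nat by blast
  have "p ^ 1 \<le> p ^ k" using k \<open>p \<ge> 2\<close> by (intro power_increasing) auto
  then show ?thesis using \<open>p \<ge> 2\<close> qdef by simp
qed

lemma CHAR_p: "CHAR('a) = p"
proof -
  have fin: "finite (UNIV :: 'a set)" by simp
  have pos: "CHAR('a) > 0" using finite_imp_CHAR_pos[OF fin] .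
  have pr: "prime CHAR('a)" using prime_CHAR_semidom[OF pos] .
  have "CHAR('a) dvd card (UNIV :: 'a set)" by (rule CHAR_dvd_CARD)
  then have "CHAR('a) dvd p ^ (k * h)" using card qdef by (simp add: power_mult)
  then have "CHAR('a) dvd p" using pr prime_dvd_power by blast
  then show ?thesis using pr p primes_dvd_imp_eq by blast
qed

lemma frob_add: "(x + y :: 'a) ^ (q ^ i) = x ^ (q ^ i) + y ^ (q ^ i)"
proof -
  have "q ^ i = CHAR('a) ^ (k * i)" using CHAR_p qdef by (simp add: power_mult)
  then show ?thesis using freshmans_dream'[where x=x and y=y and m="q ^ i" and n="k * i"] CHAR_p p by simp
qed

lemma frob_sum: "(\<Sum>j\<in>A. f j :: 'a) ^ (q ^ i) = (\<Sum>j\<in>A. f j ^ (q ^ i))"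
proof -
  have "q ^ i = CHAR('a) ^ (k * i)" using CHAR_p qdef by (simp add: power_mult)
  then show ?thesis using freshmans_dream_sum'[where f=f and A=A and m="q ^ i" and n="k * i"] CHAR_p p by simp
qed

lemma pow_card: "(x :: 'a) ^ (q ^ h) = x"
proof (cases "x = 0")
  case False
  have "x * (\<Prod>y\<in>UNIV-{0}. x * y) = x * x ^ (card (UNIV :: 'a set) - 1) * \<Prod>(UNIV-{0})"
    by (simp add: prod.distrib mult_ac)
  also have "x * x ^ (card (UNIV :: 'a set) - 1) = x ^ Suc (card (UNIV :: 'a set) - 1)"
    by (subst power_Suc) auto
  also have "Suc (card (UNIV :: 'a set) - 1) = card (UNIV :: 'a set)"
    using finite_UNIV_card_ge_0[where ?'a = 'a] by simp
  also have "(\<Prod>y\<in>UNIV-{0}. x * y) = (\<Prod>y\<in>UNIV-{0}. y)"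
    by (rule prod.reindex_bij_witness[of _ "\<lambda>y. y / x" "\<lambda>y. x * y"]) (use False in auto)
  finally have "x ^ card (UNIV :: 'a set) = x"
    by simp
  then show ?thesis using card by simp
next
  case True
  have "q ^ h > 0" using q_ge2 by simp
  then show ?thesis using True by simp
qed

lemma K_0: "0 \<in> KK" using q_ge2 by (simp add: Kset_def)
lemma K_1: "1 \<in> KK" by (simp add: Kset_def)

lemma frob_q: "(x + y :: 'a) ^ q = x ^ q + y ^ q"
  using frob_add[of x y 1] by simp

lemma K_add: "x \<in> KK \<Longrightarrow> y \<in> KK \<Longrightarrow> x + y \<in> KK"
  by (simp add: Kset_def frob_q)

lemma K_mult: "x \<in> KK \<Longrightarrow> y \<in> KK \<Longrightarrow> x * y \<in> KK"
  by (simp add: Kset_def power_mult_distrib)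

lemma K_uminus: assumes "x \<in> KK" shows "- x \<in> KK"
proof -
  have "0 = (x + - x) ^ q" using q_ge2 by simp
  also have "\<dots> = x ^ q + (- x) ^ q" by (rule frob_q)
  finally have "(- x) ^ q = - (x ^ q)" by (simp add: eq_neg_iff_add_eq_0 add.commute)
  then show ?thesis using assms by (simp add: Kset_def)
qed

lemma K_diff: "x \<in> KK \<Longrightarrow> y \<in> KK \<Longrightarrow> x - y \<in> KK"
  using K_add[of x "- y"] K_uminus[of y] by simp

lemma K_inverse: "x \<in> KK \<Longrightarrow> inverse x \<in> KK"
  by (simp add: Kset_def power_inverse)

lemma K_divide: "x \<in> KK \<Longrightarrow> y \<in> KK \<Longrightarrow> x / y \<in> KK"
  using K_mult[of x "inverse y"] K_inverse[of y] by (simp add: divide_inverse)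

lemma K_pow: assumes "c \<in> KK" shows "c ^ (q ^ i) = c"
proof (induction i)
  case 0 then show ?case by simp
next
  case (Suc i)
  have "c ^ (q ^ Suc i) = (c ^ (q ^ i)) ^ q" by (simp add: power_mult[symmetric] mult.commute)
  also have "\<dots> = c" using Suc assms by (simp add: Kset_def)
  finally show ?case .
qed

lemma Tr_add: "T (x + y) = T x + T y"
  by (simp add: Tr_def frob_add sum.distrib)

lemma Tr_0: "T 0 = 0"
proof -
  show ?thesis unfolding Tr_def using q_ge2 by (intro sum.neutral) (auto simp: power_0_left)
qed

lemma Tr_uminus: "T (- x) = - T x"
  using Tr_add[of x "- x"] Tr_0 by (simp add: eq_neg_iff_add_eq_0 add.commute)

lemma Tr_diff: "T (x - y) = T x - T y"
  using Tr_add[of x "- y"] Tr_uminus[of y] by simp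

lemma Tr_smult: assumes "c \<in> KK" shows "T (c * x) = c * T x"
proof -
  have "T (c * x) = (\<Sum>i<h. c ^ (q ^ i) * x ^ (q ^ i))"
    by (simp add: Tr_def power_mult_distrib)
  also have "\<dots> = (\<Sum>i<h. c * x ^ (q ^ i))" using K_pow[OF assms] by simp
  also have "\<dots> = c * T x" by (simp add: Tr_def sum_distrib_left)
  finally show ?thesis .
qed

lemma Tr_in_K: "T x \<in> KK"
proof -
  have "(T x) ^ q = (\<Sum>i<h. (x ^ (q ^ i)) ^ (q ^ 1))"
    unfolding Tr_def using frob_sum[of "\<lambda>i. x ^ (q ^ i)" "{..<h}" 1] by simp
  also have "\<dots> = (\<Sum>i<h. x ^ (q ^ Suc i))"
    by (simp add: power_mult[symmetric] mult.commute)
  finally have e1: "(T x) ^ q = (\<Sum>i<h. x ^ (q ^ Suc i))" .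
  have "(\<Sum>i<Suc h. x ^ (q ^ i)) = x ^ (q ^ 0) + (\<Sum>i<h. x ^ (q ^ Suc i))"
    by (rule sum.lessThan_Suc_shift)
  moreover have "(\<Sum>i<Suc h. x ^ (q ^ i)) = (\<Sum>i<h. x ^ (q ^ i)) + x ^ (q ^ h)"
    by simp
  ultimately have "(\<Sum>i<h. x ^ (q ^ Suc i)) = (\<Sum>i<h. x ^ (q ^ i))"
    using pow_card[of x] by simp
  then show ?thesis using e1 by (simp add: Kset_def Tr_def)
qed


lemma card_Tr_fiber: "card {x::'a. T x = c} \<le> q ^ (h - 1)"
proof -
  define P :: "'a poly" where "P = (\<Sum>i<h. monom 1 (q ^ i)) - [:c:]"
  have polyP: "poly P x = T x - c" for x by (simp add: P_def poly_sum poly_monom Tr_def)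
  have degS: "degree (\<Sum>i<h. monom (1::'a) (q ^ i)) \<le> q ^ (h - 1)"
  proof (rule degree_sum_le)
    fix i assume "i \<in> {..<h}"
    then have "q ^ i \<le> q ^ (h-1)" using q_ge2 by (intro power_increasing) auto
    then show "degree (monom (1::'a) (q ^ i)) \<le> q ^ (h - 1)"
      using degree_monom_le order_trans by blast
  qed simp
  have degP: "degree P \<le> q ^ (h - 1)"
    unfolding P_def by (rule degree_diff_le[OF degS]) simp
  have q1: "1 < q" using q_ge2 by simp
  have cS: "coeff (\<Sum>i<h. monom (1::'a) (q ^ i)) (q ^ (h - 1)) = 1"
  proof -
    have "coeff (\<Sum>i<h. monom (1::'a) (q ^ i)) (q ^ (h - 1)) = (\<Sum>i<h. coeff (monom (1::'a) (q ^ i)) (q ^ (h - 1)))"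
      by (rule coeff_sum)
    also have "\<dots> = (\<Sum>i<h. if i = h - 1 then 1 else 0)"
    proof (rule sum.cong)
      fix i assume "i \<in> {..<h}"
      have "(q ^ i = q ^ (h - 1)) = (i = h - 1)" by (rule power_inject_exp[OF q1])
      then show "coeff (monom (1::'a) (q ^ i)) (q ^ (h - 1)) = (if i = h - 1 then 1 else 0)"
        by (simp only: coeff_monom)
    qed simp
    also have "\<dots> = 1" using h by simp
    finally show ?thesis .
  qed
  obtain n where n: "q ^ (h - 1) = Suc n" using q_ge2 by (metis gr0_implies_Suc le_less_trans not_less zero_less_numeral zero_less_power)
  have "coeff P (q ^ (h - 1)) = 1" unfolding P_def using cS n by simp
  then have "P \<noteq> 0" by auto
  have "{x. T x = c} = {x. poly P x = 0}" using polyP by auto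
  also have "card \<dots> \<le> degree P" by (rule card_poly_roots_bound) fact
  finally show ?thesis using degP by simp
qed

lemma card_K: "card KK \<le> q"
proof -
  define P :: "'a poly" where "P = monom 1 q - monom 1 1"
  have polyP: "poly P x = x ^ q - x" for x by (simp add: P_def poly_monom)
  have "q \<noteq> 1" using q_ge2 by simp
  then have "coeff P q = 1" by (simp add: P_def)
  then have "P \<noteq> 0" by auto
  have degP: "degree P \<le> q"
    unfolding P_def by (rule degree_diff_le) (use q_ge2 in \<open>auto intro: order_trans[OF degree_monom_le]\<close>)
  have "KK = {x. poly P x = 0}" using polyP by (auto simp: Kset_def)
  also have "card \<dots> \<le> degree P" by (rule card_poly_roots_bound) fact
  finally show ?thesis using degP by simp
qed

lemma q_lt_Q: "q < q ^ h"
proof -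
  have "q ^ 1 < q ^ h" using q_ge2 h by (intro power_strict_increasing) auto
  then show ?thesis by simp
qed

lemma exists_notK: "\<exists>r::'a. r \<notin> KK"
proof (rule ccontr)
  assume "\<not> ?thesis"
  then have "KK = UNIV" by auto
  then have "card (UNIV :: 'a set) \<le> q" using card_K by simp
  then show False using card q_lt_Q by simp
qed

lemma Tr_nz: "\<exists>x::'a. T x \<noteq> 0"
proof (rule ccontr)
  assume "\<not> ?thesis"
  then have "{x::'a. T x = 0} = UNIV" by auto
  then have "card (UNIV :: 'a set) \<le> q ^ (h - 1)" using card_Tr_fiber[of 0] by simp
  moreover have "q ^ (h - 1) < q ^ h" using q_ge2 h by (intro power_strict_increasing) auto
  ultimately show False using card by simp
qed

lemma Tr_onto: assumes "c \<in> KK" "y \<noteq> 0" shows "\<exists>w. T (w * y) = c"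
proof -
  obtain x0 where x0: "T x0 \<noteq> 0" using Tr_nz by blast
  let ?t = "T x0"
  have ck: "c / ?t \<in> KK" using K_divide[OF assms(1) Tr_in_K] .
  have "T ((c / ?t * x0 / y) * y) = T ((c / ?t) * x0)" using assms(2) by simp
  also have "\<dots> = (c / ?t) * ?t" by (rule Tr_smult[OF ck])
  also have "\<dots> = c" using x0 by simp
  finally show ?thesis by blast
qed

lemma nondeg: assumes "\<And>w. T (w * z) = 0" shows "z = 0"
proof (rule ccontr)
  assume "z \<noteq> 0"
  then obtain w where "T (w * z) = 1" using Tr_onto[OF K_1] by blast
  then show False using assms[of w] by simp
qed

lemma Tr_smult': "c \<in> KK \<Longrightarrow> T (x * c) = T x * c"
  using Tr_smult[of c x] by (simp add: mult.commute)

lemma scale_one: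
  assumes "T v \<noteq> 0" shows "T ((1 / T v) * v) = 1"
proof -
  have "1 / T v \<in> KK" using K_divide[OF K_1 Tr_in_K] .
  then have "T ((1 / T v) * v) = (1 / T v) * T v" by (rule Tr_smult)
  then show ?thesis using assms by simp
qed

lemma surj2:
  assumes r: "r \<notin> KK" and t: "t1 \<in> KK" "t2 \<in> KK"
  shows "\<exists>w. T w = t1 \<and> T (w * r) = t2"
proof -
  obtain w0 where w0: "T (w0 * 1) = 1" using Tr_onto[OF K_1, of 1] by auto
  then have w0': "T w0 = 1" by simp
  have "\<exists>w'. T w' = 0 \<and> T (w' * r) = 1"
  proof (rule ccontr)
    assume nex: "\<not> ?thesis"
    have z: "T (w * r) = 0" if tw: "T w = 0" for w
    proof (rule ccontr)
      assume ne: "T (w * r) \<noteq> 0"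
      let ?c = "T (w * r)"
      have ck: "1 / ?c \<in> KK" using K_divide[OF K_1 Tr_in_K] .
      have "T ((1 / ?c) * w) = 0" using Tr_smult[OF ck, of w] tw by simp
      moreover have "T ((1 / ?c) * w * r) = 1"
        using scale_one[OF ne] by (simp add: mult.assoc)
      ultimately show False using nex by blast
    qed
    let ?l = "T (w0 * r)"
    have lk: "?l \<in> KK" by (rule Tr_in_K)
    have "T (w * (r - ?l)) = 0" for w
    proof -
      have tk: "T w \<in> KK" by (rule Tr_in_K)
      have "T (w - T w * w0) = T w - T w * T w0" using Tr_smult[OF tk, of w0] by (simp add: Tr_diff)
      then have "T (w - T w * w0) = 0" using w0' by simp
      then have "T ((w - T w * w0) * r) = 0" by (rule z)
      moreover have "(w - T w * w0) * r = w * r - T w * (w0 * r)" by (simp add: algebra_simps)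
      ultimately have e: "T (w * r) - T w * ?l = 0" using Tr_smult[OF tk, of "w0 * r"] by (simp add: Tr_diff)
      have "w * (r - ?l) = w * r - ?l * w" by (simp add: algebra_simps)
      then have "T (w * (r - ?l)) = T (w * r) - ?l * T w" using Tr_smult[OF lk, of w] by (simp add: Tr_diff)
      then show ?thesis using e by (simp add: mult.commute)
    qed
    then have "r - ?l = 0" by (rule nondeg)
    then have "r \<in> KK" using lk by simp
    then show False using r by simp
  qed
  then obtain w' where w': "T w' = 0" "T (w' * r) = 1" by blast
  define c where "c = t2 - t1 * T (w0 * r)"
  have ck: "c \<in> KK" unfolding c_def by (intro K_diff K_mult t Tr_in_K)
  define w where "w = t1 * w0 + c * w'"
  have "T w = t1 * T w0 + c * T w'" unfolding w_def using Tr_smult[OF t(1)] Tr_smult[OF ck] by (simp add: Tr_add)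
  then have "T w = t1" using w0' w' by simp
  moreover have "T (w * r) = t1 * T (w0 * r) + c * T (w' * r)"
  proof -
    have "w * r = t1 * (w0 * r) + c * (w' * r)" unfolding w_def by (simp add: algebra_simps)
    then show ?thesis using Tr_smult[OF t(1)] Tr_smult[OF ck] by (simp add: Tr_add)
  qed
  then have "T (w * r) = t2" using w' by (simp add: c_def)
  ultimately show ?thesis by blast
qed

end


context fsetting
begin

lemma surj3:
  assumes r: "r \<notin> KK" and nq: "\<not> (\<exists>g\<in>KK. \<exists>b\<in>KK. r * r = g * r + b)"
    and t: "t1 \<in> KK" "t2 \<in> KK" "t3 \<in> KK"
  shows "\<exists>w. T w = t1 \<and> T (w * r) = t2 \<and> T (w * (r * r)) = t3"
proof -
  obtain w1 where w1: "T w1 = 1" "T (w1 * r) = 0" using surj2[OF r K_1 K_0] by blast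
  obtain w2 where w2: "T w2 = 0" "T (w2 * r) = 1" using surj2[OF r K_0 K_1] by blast
  have "\<exists>w3. T w3 = 0 \<and> T (w3 * r) = 0 \<and> T (w3 * (r * r)) = 1"
  proof (rule ccontr)
    assume nex: "\<not> ?thesis"
    have z: "T (w * (r * r)) = 0" if tw: "T w = 0" "T (w * r) = 0" for w
    proof (rule ccontr)
      assume ne: "T (w * (r * r)) \<noteq> 0"
      let ?c = "T (w * (r * r))"
      have ck: "1 / ?c \<in> KK" using K_divide[OF K_1 Tr_in_K] .
      have "T ((1 / ?c) * w) = 0" using Tr_smult[OF ck, of w] tw by simp
      moreover have "T ((1 / ?c) * w * r) = 0"
        using Tr_smult[OF ck, of "w * r"] tw by (simp add: mult.assoc)
      moreover have "T ((1 / ?c) * w * (r * r)) = 1"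
        using scale_one[OF ne] by (simp add: mult.assoc)
      ultimately show False using nex by blast
    qed
    let ?l1 = "T (w1 * (r * r))" and ?l2 = "T (w2 * (r * r))"
    have l1k: "?l1 \<in> KK" by (rule Tr_in_K)
    have l2k: "?l2 \<in> KK" by (rule Tr_in_K)
    have "T (w * (r * r - ?l2 * r - ?l1)) = 0" for w
    proof -
      have ak: "T w \<in> KK" by (rule Tr_in_K)
      have bk: "T (w * r) \<in> KK" by (rule Tr_in_K)
      define u where "u = w - T w * w1 - T (w * r) * w2"
      have "T u = T w - T w * T w1 - T (w * r) * T w2"
        unfolding u_def using Tr_smult[OF ak, of w1] Tr_smult[OF bk, of w2] by (simp add: Tr_diff)
      then have u1: "T u = 0" using w1 w2 by simp
      have "u * r = w * r - T w * (w1 * r) - T (w * r) * (w2 * r)"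
        unfolding u_def by (simp add: algebra_simps)
      then have "T (u * r) = T (w * r) - T w * T (w1 * r) - T (w * r) * T (w2 * r)"
        using Tr_smult[OF ak, of "w1 * r"] Tr_smult[OF bk, of "w2 * r"] by (simp add: Tr_diff)
      then have u2: "T (u * r) = 0" using w1 w2 by simp
      have "T (u * (r * r)) = 0" using z[OF u1 u2] .
      moreover have "u * (r * r) = w * (r * r) - T w * (w1 * (r * r)) - T (w * r) * (w2 * (r * r))"
        unfolding u_def by (simp add: algebra_simps)
      ultimately have e: "T (w * (r * r)) - T w * ?l1 - T (w * r) * ?l2 = 0"
        using Tr_smult[OF ak, of "w1 * (r * r)"] Tr_smult[OF bk, of "w2 * (r * r)"]
        by (simp add: Tr_diff)
      have "w * (r * r - ?l2 * r - ?l1) = w * (r * r) - ?l2 * (w * r) - ?l1 * w"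
        by (simp add: algebra_simps)
      then have "T (w * (r * r - ?l2 * r - ?l1)) = T (w * (r * r)) - ?l2 * T (w * r) - ?l1 * T w"
        using Tr_smult[OF l1k, of w] Tr_smult[OF l2k, of "w * r"] by (simp add: Tr_diff)
      then show ?thesis using e by (simp add: algebra_simps)
    qed
    then have "r * r - ?l2 * r - ?l1 = 0" by (rule nondeg)
    then have "r * r = ?l2 * r + ?l1" by (simp only: diff_diff_eq right_minus_eq)
    then show False using nq l1k l2k by blast
  qed
  then obtain w3 where w3: "T w3 = 0" "T (w3 * r) = 0" "T (w3 * (r * r)) = 1" by blast
  define c where "c = t3 - t1 * T (w1 * (r * r)) - t2 * T (w2 * (r * r))"
  have ck: "c \<in> KK" unfolding c_def by (intro K_diff K_mult t Tr_in_K)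
  define w where "w = t1 * w1 + t2 * w2 + c * w3"
  have A: "T w = t1 * T w1 + t2 * T w2 + c * T w3"
    unfolding w_def using Tr_smult[OF t(1)] Tr_smult[OF t(2)] Tr_smult[OF ck] by (simp add: Tr_add)
  have B: "T (w * r) = t1 * T (w1 * r) + t2 * T (w2 * r) + c * T (w3 * r)"
  proof -
    have "w * r = t1 * (w1 * r) + t2 * (w2 * r) + c * (w3 * r)" unfolding w_def by (simp add: algebra_simps)
    then show ?thesis using Tr_smult[OF t(1)] Tr_smult[OF t(2)] Tr_smult[OF ck] by (simp add: Tr_add)
  qed
  have C: "T (w * (r * r)) = t1 * T (w1 * (r * r)) + t2 * T (w2 * (r * r)) + c * T (w3 * (r * r))"
  proof -
    have "w * (r * r) = t1 * (w1 * (r * r)) + t2 * (w2 * (r * r)) + c * (w3 * (r * r))"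
      unfolding w_def by (simp add: algebra_simps)
    then show ?thesis using Tr_smult[OF t(1)] Tr_smult[OF t(2)] Tr_smult[OF ck] by (simp add: Tr_add)
  qed
  have "T w = t1 \<and> T (w * r) = t2 \<and> T (w * (r * r)) = t3" using A B C w1 w2 w3 by (simp add: c_def)
  then show ?thesis by blast
qed

lemma beta_exists:
  assumes r: "r \<notin> KK"
  shows "\<exists>\<beta>\<in>KK. \<beta> \<noteq> 0 \<and> (\<forall>e\<in>KK. \<exists>w. T w = e \<and> T (w * r) = 0 \<and> T (w * (r * r)) = \<beta> * e)"
proof (cases "\<exists>g\<in>KK. \<exists>b\<in>KK. r * r = g * r + b")
  case True
  then obtain g b where gb: "g \<in> KK" "b \<in> KK" "r * r = g * r + b" by blast
  have b0: "b \<noteq> 0"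
  proof
    assume b0: "b = 0"
    have "r \<noteq> 0" using r K_0 by auto
    then have "r = g" using gb(3) b0 by simp
    then show False using r gb(1) by simp
  qed
  have all: "\<forall>e\<in>KK. \<exists>w. T w = e \<and> T (w * r) = 0 \<and> T (w * (r * r)) = b * e"
  proof
    fix e assume e: "e \<in> KK"
    obtain w where w: "T w = e" "T (w * r) = 0" using surj2[OF r e K_0] by blast
    have "w * (r * r) = g * (w * r) + b * w" using gb(3) by (simp add: algebra_simps)
    then have "T (w * (r * r)) = g * T (w * r) + b * T w"
      using Tr_smult[OF gb(1)] Tr_smult[OF gb(2)] by (simp add: Tr_add)
    then have "T w = e \<and> T (w * r) = 0 \<and> T (w * (r * r)) = b * e" using w by simp
    then show "\<exists>w. T w = e \<and> T (w * r) = 0 \<and> T (w * (r * r)) = b * e" by (rule exI)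
  qed
  show ?thesis
    by (rule bexI[of _ b]) (use b0 all gb(2) in auto)
next
  case False
  have all: "\<forall>e\<in>KK. \<exists>w. T w = e \<and> T (w * r) = 0 \<and> T (w * (r * r)) = 1 * e"
  proof
    fix e assume e: "e \<in> KK"
    obtain w where "T w = e \<and> T (w * r) = 0 \<and> T (w * (r * r)) = e"
      using surj3[OF r False e K_0 e] by blast
    then show "\<exists>w. T w = e \<and> T (w * r) = 0 \<and> T (w * (r * r)) = 1 * e" by auto
  qed
  show ?thesis
    by (rule bexI[of _ 1]) (use all K_1 in auto)
qed

end


definition VBset :: "('a::field \<Rightarrow> 'a) \<Rightarrow> 'a \<Rightarrow> ('a \<times> 'a \<times> 'a) set" where
  "VBset f r = (\<lambda>x. (x, r * f x + 1, 1)) ` UNIV \<union> (\<lambda>m. (1, m, 0)) ` {r * f z / z | z. z \<noteq> 0}"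

context fsetting
begin

lemma params:
  "\<exists>r v w e \<beta>. r \<notin> KK \<and> v \<noteq> 0 \<and> w \<noteq> 0 \<and> \<beta> \<in> KK \<and> e \<in> KK \<and> T (w * r) = 0 \<and> T w = e \<and>
      T (w * (r * r)) = \<beta> * e \<and> (\<forall>k\<in>KK. e * (\<beta> * k * T (1 / (v * (r * k + 1))) + 1) \<noteq> k)"
proof -
  obtain r :: 'a where r: "r \<notin> KK" using exists_notK by blast
  obtain \<beta> where \<beta>: "\<beta> \<in> KK" "\<beta> \<noteq> 0"
    and wex: "\<forall>e\<in>KK. \<exists>w. T w = e \<and> T (w * r) = 0 \<and> T (w * (r * r)) = \<beta> * e"
    using beta_exists[OF r] by blast
  have r1: "r + 1 \<noteq> 0"
  proof
    assume "r + 1 = 0"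
    then have "r = - 1" by (simp add: eq_neg_iff_add_eq_0)
    then show False using r K_uminus[OF K_1] by simp
  qed
  have mb: "- (1 / \<beta>) \<in> KK" using K_uminus[OF K_divide[OF K_1 \<beta>(1)]] .
  obtain y0 where y0: "T (y0 * 1) = - (1 / \<beta>)" using Tr_onto[OF mb, of 1] by auto
  have y0nz: "y0 \<noteq> 0"
  proof
    assume "y0 = 0"
    then have "- (1 / \<beta>) = 0" using y0 Tr_0 by simp
    then show False using \<beta>(2) by simp
  qed
  define v where "v = 1 / ((r + 1) * y0)"
  have vnz: "v \<noteq> 0" using r1 y0nz by (simp add: v_def)
  define s where "s k = T (1 / (v * (r * k + 1)))" for k
  have "1 / (v * (r * 1 + 1)) = y0" using r1 y0nz by (simp add: v_def)
  then have s1: "s 1 = - (1 / \<beta>)" using y0 by (simp add: s_def)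
  define A where "A = {k \<in> KK. \<beta> * k * s k + 1 \<noteq> 0}"
  define G where "G = (\<lambda>k. k / (\<beta> * k * s k + 1)) ` A"
  have "\<beta> * 1 * s 1 + 1 = 0" using s1 \<beta>(2) by simp
  then have AK: "A \<subseteq> KK - {1}" by (auto simp: A_def)
  have finA: "finite A" by simp
  have "card G \<le> card A" unfolding G_def by (rule card_image_le[OF finA])
  also have "card A \<le> card (KK - {1})" by (rule card_mono) (simp_all add: AK)
  also have "card (KK - {1}) < card KK" by (rule card_Diff1_less) (simp_all add: K_1)
  finally have cG: "card G < card KK" .
  have "\<not> KK \<subseteq> G"
  proof
    assume "KK \<subseteq> G"
    then have "card KK \<le> card G" by (intro card_mono) simp_all
    then show False using cG by simp
  qed
  then obtain e where e: "e \<in> KK" "e \<notin> G" by blast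
  have "0 \<in> A" using K_0 by (simp add: A_def)
  then have "0 / (\<beta> * 0 * s 0 + 1) \<in> G" unfolding G_def by (rule imageI)
  then have "0 \<in> G" by simp
  then have enz: "e \<noteq> 0" using e(2) by auto
  obtain w where w: "T w = e" "T (w * r) = 0" "T (w * (r * r)) = \<beta> * e" using wex e(1) by blast
  have wnz: "w \<noteq> 0"
  proof
    assume "w = 0"
    then show False using w(1) enz Tr_0 by simp
  qed
  have key: "\<forall>k\<in>KK. e * (\<beta> * k * s k + 1) \<noteq> k"
  proof
    fix k assume k: "k \<in> KK"
    show "e * (\<beta> * k * s k + 1) \<noteq> k"
    proof (cases "\<beta> * k * s k + 1 = 0")
      case True
      then have "k \<noteq> 0" by auto
      then show ?thesis using True by simp
    next
      case False
      then have "k \<in> A" using k by (simp add: A_def)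
      then have "k / (\<beta> * k * s k + 1) \<in> G" unfolding G_def by (rule imageI)
      then have ne: "e \<noteq> k / (\<beta> * k * s k + 1)" using e(2) by auto
      show ?thesis
      proof
        assume "e * (\<beta> * k * s k + 1) = k"
        then have "e = k / (\<beta> * k * s k + 1)" using False by (simp add: eq_divide_eq)
        then show False using ne by simp
      qed
    qed
  qed
  have "r \<notin> KK \<and> v \<noteq> 0 \<and> w \<noteq> 0 \<and> \<beta> \<in> KK \<and> e \<in> KK \<and> T (w * r) = 0 \<and> T w = e \<and>
      T (w * (r * r)) = \<beta> * e \<and> (\<forall>k\<in>KK. e * (\<beta> * k * T (1 / (v * (r * k + 1))) + 1) \<noteq> k)"
    using r vnz wnz \<beta>(1) e(1) w key by (simp add: s_def)
  then show ?thesis by blast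
qed

end


context fsetting
begin

lemma VB_nz: "(0,0,0) \<notin> VBset T r"
  unfolding VBset_def by auto

lemma VB_block:
  assumes r: "r \<notin> KK"
  shows "vblock (VBset T r)"
proof -
  let ?M = "{r * T z / z | z. z \<noteq> 0}"
  have inj: "inj (\<lambda>x. (r * T x + 1) - m * x)" if m: "m \<notin> ?M" for m
  proof (rule injI)
    fix x y assume eq: "r * T x + 1 - m * x = r * T y + 1 - m * y"
    show "x = y"
    proof (rule ccontr)
      assume ne: "x \<noteq> y"
      then have ne': "x - y \<noteq> 0" by simp
      have "r * (T x - T y) = m * (x - y)" using eq by (simp add: algebra_simps)
      then have "r * T (x - y) = m * (x - y)" by (simp add: Tr_diff)
      then have mdef: "m = r * T (x - y) / (x - y)" using ne' by (simp add: eq_divide_eq)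
      have "m \<in> ?M" by (rule CollectI, rule exI[of _ "x - y"]) (use mdef ne' in simp)
      then show False using m by simp
    qed
  qed
  have "r * T 1 / 1 \<in> ?M" by (rule CollectI, rule exI[of _ 1]) simp
  then have ne: "?M \<noteq> {}" by blast
  show ?thesis unfolding VBset_def
    by (rule redei_vblock[where f = "\<lambda>x. r * T x + 1" and M = ?M, OF inj ne])
qed

lemma VB_card: "card (VBset T r) \<le> q ^ h + (q ^ (h - 1) + 1)"
proof -
  let ?M = "{r * T z / z | z. z \<noteq> 0}"
  have sub: "?M \<subseteq> insert 0 ((\<lambda>y. r / y) ` {y. T y = 1})"
  proof
    fix m assume "m \<in> ?M"
    then obtain z where z: "z \<noteq> 0" "m = r * T z / z" by blast
    show "m \<in> insert 0 ((\<lambda>y. r / y) ` {y. T y = 1})"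
    proof (cases "T z = 0")
      case True
      then show ?thesis using z by simp
    next
      case False
      have "T ((1 / T z) * z) = 1" by (rule scale_one[OF False])
      moreover have "r / ((1 / T z) * z) = m" using z False by simp
      ultimately show ?thesis by blast
    qed
  qed
  have "card ?M \<le> card (insert 0 ((\<lambda>y. r / y) ` {y. T y = 1}))" by (rule card_mono) (simp_all add: sub)
  also have "\<dots> \<le> Suc (card ((\<lambda>y. r / y) ` {y. T y = 1}))" by (rule card_insert_le_m1) simp_all
  also have "card ((\<lambda>y. r / y) ` {y. T y = 1}) \<le> card {y::'a. T y = 1}" by (rule card_image_le) simp
  also have "card {y::'a. T y = 1} \<le> q ^ (h - 1)" by (rule card_Tr_fiber)
  finally have cM: "card ?M \<le> q ^ (h - 1) + 1" by simp
  have "card (VBset T r) \<le> card ((\<lambda>x. (x, r * T x + 1, 1::'a)) ` UNIV) + card ((\<lambda>m. (1::'a, m, 0::'a)) ` ?M)"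
    unfolding VBset_def by (rule card_Un_le)
  also have "card ((\<lambda>x. (x, r * T x + 1, 1::'a)) ` UNIV) \<le> card (UNIV :: 'a set)" by (rule card_image_le) simp
  also have "card ((\<lambda>m. (1::'a, m, 0::'a)) ` ?M) \<le> card ?M" by (rule card_image_le) simp
  finally show ?thesis using cM card by simp
qed

lemma VB_cases:
  assumes "v \<in> VBset T r"
  shows "(\<exists>x. v = (x, r * T x + 1, 1)) \<or> (\<exists>z. z \<noteq> 0 \<and> v = (1, r * T z / z, 0))"
  using assms unfolding VBset_def by auto

lemma VB_nodisj:
  assumes r: "r \<notin> KK" and v: "v \<noteq> 0" and w: "w \<noteq> 0" and bK: "\<beta> \<in> KK" and eK: "e \<in> KK"
    and wr: "T (w * r) = 0" and we: "T w = e" and wrr: "T (w * (r * r)) = \<beta> * e"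
    and key: "\<forall>k\<in>KK. e * (\<beta> * k * T (1 / (v * (r * k + 1))) + 1) \<noteq> k"
    and v1: "v1 \<in> VBset T r" and v2: "v2 \<in> VBset T r"
  shows "nmap (v / w) v v1 \<noteq> sc c v2"
proof
  assume eq: "nmap (v / w) v v1 = sc c v2"
  have fnz: "r * T x + 1 \<noteq> 0" for x
  proof
    assume h0: "r * T x + 1 = 0"
    then have tx: "T x \<noteq> 0" by auto
    have rt: "r * T x = - 1" using h0 by (simp add: eq_neg_iff_add_eq_0)
    have "r = (r * T x) / T x" using tx by simp
    then have "r = - 1 / T x" using rt by simp
    moreover have "- 1 / T x \<in> KK" by (intro K_divide K_uminus K_1 Tr_in_K)
    ultimately show False using r by simp
  qed
  have Mprop: "r * T z / z \<noteq> 1 / w" if z: "z \<noteq> 0" for z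
  proof
    assume m1: "r * T z / z = 1 / w"
    have "r * T z = z / w" using m1 z by (simp add: divide_eq_eq)
    then have h1: "z = w * (r * T z)" using w by (simp add: eq_divide_eq mult.commute)
    have h2: "w * (r * T z) = T z * (w * r)" by (simp only: mult_ac)
    have zz: "z = T z * (w * r)" using h1 h2 by (rule trans)
    from zz have "T z = T (T z * (w * r))" by (rule arg_cong)
    also have "\<dots> = T z * T (w * r)" by (rule Tr_smult[OF Tr_in_K])
    finally have tz: "T z = 0" using wr by simp
    have "T z * (w * r) = 0" using tz by simp
    then have "z = 0" using zz by (rule trans[rotated])
    then show False using z by simp
  qed
  from VB_cases[OF v1] show False
  proof
    assume "\<exists>x. v1 = (x, r * T x + 1, 1)"
    then obtain x where a: "v1 = (x, r * T x + 1, 1)" by blast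
    from VB_cases[OF v2] show False
    proof
      assume "\<exists>x'. v2 = (x', r * T x' + 1, 1)"
      then obtain x' where a2: "v2 = (x', r * T x' + 1, 1)" by blast
      have e1: "1 = c * x'" using eq a a2 by (simp add: nmap_def sc_def)
      have e2: "v / w * x = c * (r * T x' + 1)" using eq a a2 by (simp add: nmap_def sc_def)
      have e3: "v * (r * T x + 1) = c" using eq a a2 by (simp add: nmap_def sc_def)
      define k where "k = T x"
      have kK: "k \<in> KK" unfolding k_def by (rule Tr_in_K)
      have Ynz: "r * k + 1 \<noteq> 0" unfolding k_def by (rule fnz)
      have cnz: "c \<noteq> 0" using e1 by auto
      have x'def: "x' = 1 / (v * (r * k + 1))" using e1 e3 cnz by (simp add: k_def eq_divide_eq mult.commute)
      define s where "s = T (1 / (v * (r * k + 1)))"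
      have sK: "s \<in> KK" unfolding s_def by (rule Tr_in_K)
      have "T x' = s" using x'def by (simp add: s_def)
      then have e2': "v / w * x = v * (r * k + 1) * (r * s + 1)" using e2 e3 by (simp add: k_def)
      have "x = (w / v) * (v / w * x)" using v w by simp
      also have "\<dots> = (w / v) * (v * (r * k + 1) * (r * s + 1))" by (simp only: e2')
      also have "\<dots> = w * (r * k + 1) * (r * s + 1)" using v by simp
      finally have xdef: "x = w * (r * k + 1) * (r * s + 1)" .
      have "x = (k * s) * (w * (r * r)) + k * (w * r) + s * (w * r) + w"
        unfolding xdef by (simp add: algebra_simps)
      then have "T x = (k * s) * T (w * (r * r)) + k * T (w * r) + s * T (w * r) + T w"
        using Tr_smult[OF K_mult[OF kK sK]] Tr_smult[OF kK] Tr_smult[OF sK] by (simp add: Tr_add)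
      then have "k = e * (\<beta> * k * s + 1)" using wr we wrr by (simp add: k_def algebra_simps)
      then have kk: "e * (\<beta> * k * s + 1) = k" by (rule sym)
      have "e * (\<beta> * k * T (1 / (v * (r * k + 1))) + 1) \<noteq> k" using key kK by blast
      then show False using kk unfolding s_def by blast
    next
      assume "\<exists>z. z \<noteq> 0 \<and> v2 = (1, r * T z / z, 0)"
      then obtain z where b2: "v2 = (1, r * T z / z, 0)" by blast
      have "v * (r * T x + 1) = 0" using eq a b2 by (simp add: nmap_def sc_def)
      then show False using v fnz by simp
    qed
  next
    assume "\<exists>z. z \<noteq> 0 \<and> v1 = (1, r * T z / z, 0)"
    then obtain z where z: "z \<noteq> 0" and b: "v1 = (1, r * T z / z, 0)" by blast
    from VB_cases[OF v2] show False
    proof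
      assume "\<exists>x'. v2 = (x', r * T x' + 1, 1)"
      then obtain x' where a2: "v2 = (x', r * T x' + 1, 1)" by blast
      have e1: "0 = c * x'" using eq b a2 by (simp add: nmap_def sc_def)
      have e2: "v / w = c * (r * T x' + 1)" using eq b a2 by (simp add: nmap_def sc_def)
      have e3: "v * (r * T z / z) = c" using eq b a2 by (simp add: nmap_def sc_def)
      have cnz: "c \<noteq> 0" using e2 v w by auto
      then have "x' = 0" using e1 by simp
      then have "v / w = c" using e2 Tr_0 by simp
      then have "v * (r * T z / z) = v * (1 / w)" using e3 by simp
      then have "r * T z / z = 1 / w" by (rule mult_left_cancel[OF v, THEN iffD1])
      then show False using Mprop[OF z] by simp
    next
      assume "\<exists>z'. z' \<noteq> 0 \<and> v2 = (1, r * T z' / z', 0)"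
      then obtain z' where b2: "v2 = (1, r * T z' / z', 0)" by blast
      have "c = 0" using eq b b2 by (simp add: nmap_def sc_def)
      moreover have "v / w = c * (r * T z' / z')" using eq b b2 by (simp add: nmap_def sc_def)
      ultimately show False using v w by simp
    qed
  qed
qed

end


lemma sc_sc: "sc a (sc b v) = sc (a * b) v"
  by (simp add: sc_def mult.assoc)

lemma sc_1: "sc 1 v = v"
  by (simp add: sc_def)

lemma sc_0: "sc 0 v = (0,0,0)"
  by (simp add: sc_def)

lemma finite_pts: "finite (X :: ('a::finite \<times> 'a \<times> 'a) set set)"
  by (rule finite_subset[OF subset_UNIV]) simp

lemma pad_set:
  assumes "finite U" "A \<subseteq> U" "card A \<le> n" "n \<le> card U"
  shows "\<exists>B. A \<subseteq> B \<and> B \<subseteq> U \<and> card B = n"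
proof -
  have fA: "finite A" using assms(1,2) finite_subset by blast
  have "card (U - A) = card U - card A" using assms(1,2) fA by (simp add: card_Diff_subset)
  then have "n - card A \<le> card (U - A)" using assms(3,4) by simp
  then obtain C where C: "C \<subseteq> U - A" "card C = n - card A" "finite C"
    by (rule obtain_subset_with_card_n)
  have "card (A \<union> C) = card A + card C"
    using C fA by (intro card_Un_disjoint) auto
  then have "card (A \<union> C) = n" using C assms(3) by simp
  moreover have "A \<subseteq> A \<union> C" "A \<union> C \<subseteq> U" using C assms(2) by auto
  ultimately show ?thesis by blast
qed

lemma card_points:
  "card (UNIV::'a set) * card (UNIV::'a set) + card (UNIV::'a set) + 1
     \<le> card (pg_points :: ('a::{field,finite} \<times> 'a \<times> 'a) set set)"
proof -
  define S1 where "S1 = (\<lambda>(x,y). pg_point (x, y, 1::'a)) ` (UNIV :: ('a \<times> 'a) set)"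
  define S2 where "S2 = (\<lambda>x. pg_point (x, 1::'a, 0::'a)) ` (UNIV :: 'a set)"
  define S3 where "S3 = {pg_point (1::'a, 0::'a, 0::'a)}"
  have inj1: "inj (\<lambda>(x,y). pg_point (x, y, 1::'a))"
  proof (rule injI)
    fix a b :: "'a \<times> 'a"
    assume eq: "(\<lambda>(x,y). pg_point (x, y, 1::'a)) a = (\<lambda>(x,y). pg_point (x, y, 1::'a)) b"
    obtain x y where a: "a = (x, y)" by (cases a)
    obtain x' y' where b: "b = (x', y')" by (cases b)
    have "pg_point (x, y, 1) = pg_point (x', y', 1)" using eq a b by simp
    then obtain c where "c \<noteq> 0" "(x', y', 1) = sc c (x, y, 1)" by (blast dest: pg_point_eqD)
    then show "a = b" using a b by (simp add: sc_def)
  qed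
  have inj2: "inj (\<lambda>x. pg_point (x, 1::'a, 0::'a))"
  proof (rule injI)
    fix x x' :: 'a
    assume "pg_point (x, 1, 0) = pg_point (x', 1, 0)"
    then obtain c where "c \<noteq> 0" "(x', 1, 0) = sc c (x, 1, 0)" by (blast dest: pg_point_eqD)
    then show "x = x'" by (simp add: sc_def)
  qed
  have c1: "card S1 = card (UNIV::'a set) * card (UNIV::'a set)"
  proof -
    have "card S1 = card (UNIV :: ('a \<times> 'a) set)" unfolding S1_def using inj1 by (simp add: card_image)
    also have "\<dots> = card (UNIV \<times> UNIV :: ('a \<times> 'a) set)" by simp
    also have "\<dots> = card (UNIV::'a set) * card (UNIV::'a set)" by (rule card_cartesian_product)
    finally show ?thesis .
  qed
  have c2: "card S2 = card (UNIV::'a set)" unfolding S2_def using inj2 by (simp add: card_image)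
  have c3: "card S3 = 1" by (simp add: S3_def)
  have d12: "S1 \<inter> S2 = {}"
  proof (rule ccontr)
    assume "S1 \<inter> S2 \<noteq> {}"
    then obtain x y x' where "pg_point (x, y, 1::'a) = pg_point (x', 1, 0)" unfolding S1_def S2_def by auto
    then obtain c where "c \<noteq> 0" "(x', 1, 0) = sc c (x, y, 1::'a)" by (blast dest: pg_point_eqD)
    then show False by (simp add: sc_def)
  qed
  have d13: "S1 \<inter> S3 = {}"
  proof (rule ccontr)
    assume "S1 \<inter> S3 \<noteq> {}"
    then obtain x y where "pg_point (x, y, 1::'a) = pg_point (1, 0, 0)" unfolding S1_def S3_def by auto
    then obtain c where "c \<noteq> 0" "(1, 0, 0) = sc c (x, y, 1::'a)" by (blast dest: pg_point_eqD)
    then show False by (simp add: sc_def)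
  qed
  have d23: "S2 \<inter> S3 = {}"
  proof (rule ccontr)
    assume "S2 \<inter> S3 \<noteq> {}"
    then obtain x where "pg_point (x, 1, 0::'a) = pg_point (1, 0, 0)" unfolding S2_def S3_def by auto
    then obtain c where "c \<noteq> 0" "(1, 0, 0) = sc c (x, 1, 0::'a)" by (blast dest: pg_point_eqD)
    then show False by (simp add: sc_def)
  qed
  have sub: "S1 \<union> S2 \<union> S3 \<subseteq> pg_points"
    unfolding S1_def S2_def S3_def by (auto intro!: pg_point_in_points)
  have eqc: "card (S1 \<union> S2 \<union> S3) = card S1 + card S2 + card S3"
  proof -
    have "card (S1 \<union> S2 \<union> S3) = card (S1 \<union> S2) + card S3"
      using d13 d23 by (intro card_Un_disjoint) (auto intro: finite_pts)
    also have "card (S1 \<union> S2) = card S1 + card S2"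
      using d12 by (intro card_Un_disjoint) (auto intro: finite_pts)
    finally show ?thesis .
  qed
  have "card (S1 \<union> S2 \<union> S3) \<le> card (pg_points :: ('a \<times> 'a \<times> 'a) set set)"
    using sub by (intro card_mono finite_pts)
  then show ?thesis using eqc c1 c2 c3 by simp
qed

lemma arith_bound:
  fixes q h :: nat
  assumes "q \<ge> 2" "h \<ge> 2"
  shows "3 * (q ^ h + q ^ (h - 1) + 1) \<le> q ^ h * q ^ h + q ^ h + 1"
proof -
  define a where "a = q ^ (h - 1)"
  have qa: "q ^ h = q * a" unfolding a_def using assms(2)
    by (metis Suc_diff_1 less_le_trans numeral_2_eq_2 pos2 power_Suc)
  have a2: "a \<ge> 2"
  proof -
    have "q ^ 1 \<le> q ^ (h - 1)" using assms by (intro power_increasing) auto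
    then show ?thesis using assms(1) a_def by simp
  qed
  have Q2a: "2 * a \<le> q ^ h" using qa assms(1) by simp
  have Q4: "4 \<le> q ^ h" using Q2a a2 by simp
  have "4 * q ^ h \<le> q ^ h * q ^ h" using Q4 by (intro mult_right_mono) simp_all
  moreover have "3 * (q ^ h + a + 1) = 3 * q ^ h + 3 * a + 3" by simp
  ultimately show ?thesis unfolding a_def[symmetric] using Q2a a2 by linarith
qed

context fsetting
begin

lemma D1:
  assumes r: "r \<notin> KK" and v: "v \<noteq> 0" and w: "w \<noteq> 0" and bK: "\<beta> \<in> KK" and eK: "e \<in> KK"
    and wr: "T (w * r) = 0" and we: "T w = e" and wrr: "T (w * (r * r)) = \<beta> * e"
    and key: "\<forall>k\<in>KK. e * (\<beta> * k * T (1 / (v * (r * k + 1))) + 1) \<noteq> k"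
    and v1: "v1 \<in> VBset T r" and v2: "v2 \<in> VBset T r"
  shows "sig (v / w) v v2 \<noteq> sc c v1"
proof
  assume eq: "sig (v / w) v v2 = sc c v1"
  have a0: "v / w \<noteq> 0" using v w by simp
  have "v2 = nmap (v / w) v (sig (v / w) v v2)" using nmap_sig[OF a0 v] by simp
  also have "\<dots> = sc c (nmap (v / w) v v1)" using eq by (simp add: nmap_sc)
  finally have v2e: "v2 = sc c (nmap (v / w) v v1)" .
  have "c \<noteq> 0"
  proof
    assume "c = 0"
    then have "v2 = (0,0,0)" using v2e by (simp add: sc_0)
    then show False using v2 VB_nz by simp
  qed
  then have "nmap (v / w) v v1 = sc (1 / c) v2" using v2e by (simp add: sc_sc sc_1)
  then show False using VB_nodisj[OF r v w bK eK wr we wrr key v1 v2] by simp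
qed

lemma main_exists:
  assumes t: "t \<in> {2, 3}"
  shows "\<exists>X. X \<subseteq> (pg_points :: ('a \<times> 'a \<times> 'a) set set) \<and> card X \<le> t * (q ^ h + q ^ (h - 1) + 1) \<and>
           (\<forall>L \<in> (pg_lines :: ('a \<times> 'a \<times> 'a) set set set). t \<le> card (X \<inter> L))"
proof -
  obtain r v w e \<beta> where H: "r \<notin> KK \<and> v \<noteq> 0 \<and> w \<noteq> 0 \<and> \<beta> \<in> KK \<and> e \<in> KK \<and> T (w * r) = 0 \<and> T w = e \<and>
      T (w * (r * r)) = \<beta> * e \<and> (\<forall>k\<in>KK. e * (\<beta> * k * T (1 / (v * (r * k + 1))) + 1) \<noteq> k)"
    using params by (elim exE)
  have r: "r \<notin> KK" using H by blast
  have v: "v \<noteq> 0" using H by blast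
  have w: "w \<noteq> 0" using H by blast
  have bK: "\<beta> \<in> KK" using H by blast
  have eK: "e \<in> KK" using H by blast
  have wr: "T (w * r) = 0" using H by blast
  have we: "T w = e" using H by blast
  have wrr: "T (w * (r * r)) = \<beta> * e" using H by blast
  have key: "\<forall>k\<in>KK. e * (\<beta> * k * T (1 / (v * (r * k + 1))) + 1) \<noteq> k" using H by blast
  define a where "a = v / w"
  have a0: "a \<noteq> 0" using v w by (simp add: a_def)
  define V0 where "V0 = VBset T r"
  define V1 where "V1 = sig a v ` V0"
  define V2 where "V2 = sig a v ` V1"
  define P0 where "P0 = pg_point ` V0"
  define P1 where "P1 = pg_point ` V1"
  define P2 where "P2 = pg_point ` V2"
  note D = D1[OF r v w bK eK wr we wrr key, folded a_def V0_def]
  have bl0: "vblock V0" unfolding V0_def by (rule VB_block[OF r])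
  have bl1: "vblock V1" unfolding V1_def by (rule vblock_sig[OF bl0 a0 v])
  have bl2: "vblock V2" unfolding V2_def by (rule vblock_sig[OF bl1 a0 v])
  have nz0: "(0,0,0) \<notin> V0" unfolding V0_def by (rule VB_nz)
  have nzs: "(0,0,0) \<notin> sig a v ` S" if "(0,0,0) \<notin> S" for S
  proof
    assume "(0,0,0) \<in> sig a v ` S"
    then obtain x where x: "x \<in> S" "(0,0,0) = sig a v x" by blast
    have "x \<noteq> (0,0,0)" using x(1) that by blast
    then have "sig a v x \<noteq> (0,0,0)" by (rule sig_nz[OF a0 v])
    then show False using x(2) by simp
  qed
  have nz1: "(0,0,0) \<notin> V1" unfolding V1_def by (rule nzs[OF nz0])
  have nz2: "(0,0,0) \<notin> V2" unfolding V2_def by (rule nzs[OF nz1])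
  have pts_sub: "pg_point ` S \<subseteq> pg_points" if "(0,0,0) \<notin> S" for S :: "('a \<times> 'a \<times> 'a) set"
  proof (rule image_subsetI)
    fix x assume "x \<in> S"
    then have "x \<noteq> (0,0,0)" using that by blast
    then show "pg_point x \<in> pg_points" by (rule pg_point_in_points)
  qed
  have sub0: "P0 \<subseteq> pg_points" unfolding P0_def by (rule pts_sub[OF nz0])
  have sub1: "P1 \<subseteq> pg_points" unfolding P1_def by (rule pts_sub[OF nz1])
  have sub2: "P2 \<subseteq> pg_points" unfolding P2_def by (rule pts_sub[OF nz2])
  have inP0: "\<exists>v1\<in>V0. x = pg_point v1" if "x \<in> P0" for x
    using that unfolding P0_def by (rule imageE) blast
  have inP1: "\<exists>v1\<in>V0. x = pg_point (sig a v v1)" if hx: "x \<in> P1" for x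
  proof -
    obtain y where y: "x = pg_point y" "y \<in> V1" using hx unfolding P1_def by (rule imageE)
    obtain v1 where "y = sig a v v1" "v1 \<in> V0" using y(2) unfolding V1_def by (rule imageE)
    then show ?thesis using y(1) by blast
  qed
  have inP2: "\<exists>v1\<in>V0. x = pg_point (sig a v (sig a v v1))" if hx: "x \<in> P2" for x
  proof -
    obtain y where y: "x = pg_point y" "y \<in> V2" using hx unfolding P2_def by (rule imageE)
    obtain y' where y': "y = sig a v y'" "y' \<in> V1" using y(2) unfolding V2_def by (rule imageE)
    obtain v1 where "y' = sig a v v1" "v1 \<in> V0" using y'(2) unfolding V1_def by (rule imageE)
    then show ?thesis using y(1) y'(1) by blast
  qed
  have d01: "P0 \<inter> P1 = {}"
  proof (rule ccontr)
    assume "P0 \<inter> P1 \<noteq> {}"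
    then obtain x where x: "x \<in> P0" "x \<in> P1" by blast
    obtain v1 where v1: "v1 \<in> V0" "x = pg_point v1" using inP0[OF x(1)] by blast
    obtain v2 where v2: "v2 \<in> V0" "x = pg_point (sig a v v2)" using inP1[OF x(2)] by blast
    have "pg_point v1 = pg_point (sig a v v2)" using v1(2) v2(2) by simp
    then obtain c where "sig a v v2 = sc c v1" by (blast dest: pg_point_eqD)
    then show False using D[OF v1(1) v2(1)] by simp
  qed
  have d12: "P1 \<inter> P2 = {}"
  proof (rule ccontr)
    assume "P1 \<inter> P2 \<noteq> {}"
    then obtain x where x: "x \<in> P1" "x \<in> P2" by blast
    obtain v1 where v1: "v1 \<in> V0" "x = pg_point (sig a v v1)" using inP1[OF x(1)] by blast
    obtain v2 where v2: "v2 \<in> V0" "x = pg_point (sig a v (sig a v v2))" using inP2[OF x(2)] by blast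
    have "pg_point (sig a v v1) = pg_point (sig a v (sig a v v2))" using v1(2) v2(2) by simp
    then obtain c where "sig a v (sig a v v2) = sc c (sig a v v1)" by (blast dest: pg_point_eqD)
    then have "sig a v (sig a v v2) = sig a v (sc c v1)" by (simp add: sig_sc)
    then have "nmap a v (sig a v (sig a v v2)) = nmap a v (sig a v (sc c v1))" by simp
    then have "sig a v v2 = sc c v1" using nmap_sig[OF a0 v] by simp
    then show False using D[OF v1(1) v2(1)] by simp
  qed
  have d02: "P0 \<inter> P2 = {}"
  proof (rule ccontr)
    assume "P0 \<inter> P2 \<noteq> {}"
    then obtain x where x: "x \<in> P0" "x \<in> P2" by blast
    obtain v1 where v1: "v1 \<in> V0" "x = pg_point v1" using inP0[OF x(1)] by blast
    obtain v2 where v2: "v2 \<in> V0" "x = pg_point (sig a v (sig a v v2))" using inP2[OF x(2)] by blast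
    have "pg_point v1 = pg_point (sig a v (sig a v v2))" using v1(2) v2(2) by simp
    then obtain c where c: "c \<noteq> 0" "sig a v (sig a v v2) = sc c v1" by (blast dest: pg_point_eqD)
    then have "sig a v (sig a v (sig a v v2)) = sig a v (sc c v1)" by simp
    then have "sc (1 / (a * v)) v2 = sc c (sig a v v1)" using sig3[OF a0 v] by (simp add: sig_sc)
    then have "sc (1 / c) (sc (1 / (a * v)) v2) = sc (1 / c) (sc c (sig a v v1))" by simp
    then have "sig a v v1 = sc (1 / c * (1 / (a * v))) v2" using c(1) by (simp add: sc_sc sc_1)
    then show False using D[OF v2(1) v1(1)] by simp
  qed
  have meet: "\<exists>P \<in> pg_point ` S. P \<in> L" if "vblock S" "(0,0,0) \<notin> S" "L \<in> pg_lines" for S :: "('a \<times> 'a \<times> 'a) set" and L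
    using vblock_meets[OF that] by blast
  have cV1: "card V1 \<le> card V0" unfolding V1_def by (rule card_image_le) simp
  have cV2: "card V2 \<le> card V0" unfolding V2_def using cV1 card_image_le[of V1 "sig a v"] by simp
  have cP0: "card P0 \<le> card V0" unfolding P0_def by (rule card_image_le) simp
  have cP1: "card P1 \<le> card V0" unfolding P1_def using cV1 card_image_le[of V1 pg_point] by simp
  have cP2: "card P2 \<le> card V0" unfolding P2_def using cV2 card_image_le[of V2 pg_point] by simp
  have cV0: "card V0 \<le> q ^ h + q ^ (h - 1) + 1" unfolding V0_def using VB_card[of r] by simp
  show ?thesis
  proof (cases "t = 2")
    case True
    define X where "X = P0 \<union> P1"
    have "X \<subseteq> pg_points" using sub0 sub1 by (simp add: X_def)
    moreover have "card X \<le> t * (q ^ h + q ^ (h - 1) + 1)"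
    proof -
      have "card X \<le> card P0 + card P1" unfolding X_def by (rule card_Un_le)
      then show ?thesis using cP0 cP1 cV0 True by simp
    qed
    moreover have "\<forall>L \<in> (pg_lines :: ('a \<times> 'a \<times> 'a) set set set). t \<le> card (X \<inter> L)"
    proof
      fix L :: "('a \<times> 'a \<times> 'a) set set" assume L: "L \<in> pg_lines"
      obtain x0 where x0: "x0 \<in> P0" "x0 \<in> L" using meet[OF bl0 nz0 L] unfolding P0_def by blast
      obtain x1 where x1: "x1 \<in> P1" "x1 \<in> L" using meet[OF bl1 nz1 L] unfolding P1_def by blast
      have "x0 \<noteq> x1" using x0 x1 d01 by blast
      have "{x0, x1} \<subseteq> X \<inter> L" using x0 x1 by (auto simp: X_def)
      then have "card {x0, x1} \<le> card (X \<inter> L)" by (intro card_mono finite_pts)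
      then show "t \<le> card (X \<inter> L)" using \<open>x0 \<noteq> x1\<close> True by simp
    qed
    ultimately show ?thesis by blast
  next
    case False
    then have t3: "t = 3" using t by simp
    define X where "X = P0 \<union> P1 \<union> P2"
    have "X \<subseteq> pg_points" using sub0 sub1 sub2 by (simp add: X_def)
    moreover have "card X \<le> t * (q ^ h + q ^ (h - 1) + 1)"
    proof -
      have "card X \<le> card (P0 \<union> P1) + card P2" unfolding X_def by (rule card_Un_le)
      moreover have "card (P0 \<union> P1) \<le> card P0 + card P1" by (rule card_Un_le)
      ultimately show ?thesis using cP0 cP1 cP2 cV0 t3 by simp
    qed
    moreover have "\<forall>L \<in> (pg_lines :: ('a \<times> 'a \<times> 'a) set set set). t \<le> card (X \<inter> L)"
    proof
      fix L :: "('a \<times> 'a \<times> 'a) set set" assume L: "L \<in> pg_lines"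
      obtain x0 where x0: "x0 \<in> P0" "x0 \<in> L" using meet[OF bl0 nz0 L] unfolding P0_def by blast
      obtain x1 where x1: "x1 \<in> P1" "x1 \<in> L" using meet[OF bl1 nz1 L] unfolding P1_def by blast
      obtain x2 where x2: "x2 \<in> P2" "x2 \<in> L" using meet[OF bl2 nz2 L] unfolding P2_def by blast
      have n01: "x0 \<noteq> x1" using x0 x1 d01 by blast
      have n12: "x1 \<noteq> x2" using x1 x2 d12 by blast
      have n02: "x0 \<noteq> x2" using x0 x2 d02 by blast
      have "{x0, x1, x2} \<subseteq> X \<inter> L" using x0 x1 x2 by (auto simp: X_def)
      then have "card {x0, x1, x2} \<le> card (X \<inter> L)" by (intro card_mono finite_pts)
      then show "t \<le> card (X \<inter> L)" using n01 n12 n02 t3 by simp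
    qed
    ultimately show ?thesis by blast
  qed
qed

end

theorem theorem1p3:
  fixes q h t :: nat
  assumes "prime_power q"
    and "h \<ge> 2"
    and "card (UNIV :: 'a::{field,finite} set) = q ^ h"
    and "t \<in> {2, 3}"
  shows "\<exists>B :: ('a \<times> 'a \<times> 'a) set set.
           t_fold_blocking_set t B \<and> card B = t * (q ^ h + q ^ (h - 1) + 1)"
proof -
  obtain p k where pk: "prime p" "k \<ge> 1" "q = p ^ k" using assms(1) unfolding prime_power_def by blast
  interpret fsetting q h p k "TYPE('a)"
    by unfold_locales (use pk assms(2,3) in auto)
  obtain X where X: "X \<subseteq> (pg_points :: ('a \<times> 'a \<times> 'a) set set)"
    "card X \<le> t * (q ^ h + q ^ (h - 1) + 1)"
    "\<forall>L \<in> (pg_lines :: ('a \<times> 'a \<times> 'a) set set set). t \<le> card (X \<inter> L)"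
    using main_exists[OF assms(4)] by blast
  have "t * (q ^ h + q ^ (h - 1) + 1) \<le> 3 * (q ^ h + q ^ (h - 1) + 1)" using assms(4) by auto
  also have "\<dots> \<le> q ^ h * q ^ h + q ^ h + 1" by (rule arith_bound[OF q_ge2 assms(2)])
  also have "\<dots> \<le> card (pg_points :: ('a \<times> 'a \<times> 'a) set set)" using card_points[where 'a='a] assms(3) by simp
  finally have le: "t * (q ^ h + q ^ (h - 1) + 1) \<le> card (pg_points :: ('a \<times> 'a \<times> 'a) set set)" .
  obtain B where B: "X \<subseteq> B" "B \<subseteq> pg_points" "card B = t * (q ^ h + q ^ (h - 1) + 1)"
    using pad_set[OF finite_pts X(1) X(2) le] by blast
  have "t_fold_blocking_set t B"
    unfolding t_fold_blocking_set_def
  proof (intro conjI ballI)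
    show "B \<subseteq> pg_points" by (rule B(2))
    fix L :: "('a \<times> 'a \<times> 'a) set set" assume L: "L \<in> pg_lines"
    have "t \<le> card (X \<inter> L)" using X(3) L by blast
    also have "card (X \<inter> L) \<le> card (B \<inter> L)" using B(1) by (intro card_mono finite_pts) auto
    finally show "t \<le> card (B \<inter> L)" .
  qed
  then show ?thesis using B(3) by blast
qed


end
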